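(* For $\delta>0$ consider the data on $\mathbb{R}$ at times $0,1/3,2/3,1$: $\mu^\star_0=\mu^\star_1=\mathcal N(0,1)$ and $\mu^\star_{1/3}=\mu^\star_{2/3}=\mathcal N(0,\delta^2)$. For all sufficiently small $\delta>0$, the E-spline interpolation and the transport spline interpolation of these data do not coincide.
   Context: Transport spline: draw $Y_0\sim\mu^\star_0$, set $Y_{t_i}=T_i(Y_{t_{i-1}})$ with $T_i$ the Monge (optimal transport, quadratic cost) map from $\mu^\star_{t_{i-1}}$ to $\mu^\star_{t_i}$, let $(Y_t)$ be the Euclidean natural cubic spline (piecewise cubic, $C^2$, zero second derivative at $0,1$) through $(t_i,Y_{t_i})$, and take the curve $\mu_t=\mathrm{law}(Y_t)$. E-spline: a minimizer of $\int_0^1\|\partial_t^2F^{-1}_{\mu_t}\|^2_{L^2[0,1]}dt$ over curves $(\mu_t)$ in $\mathcal P_2(\mathbb{R})$ with $\mu_{t_i}=\mu^\star_{t_i}$, where $F^{-1}_\mu$ is the quantile function (equivalently, minimizing $\int_0^1\|\nabla_{v_t}v_t\|^2_{L^2(\mu_t)}dt$ with $v_t$ the tangent velocity field). *)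

theory Defs
  imports "HOL-Probability.Probability"
begin

definition P2 :: "real measure \<Rightarrow> bool" where
  "P2 \<mu> \<longleftrightarrow> sets \<mu> = sets borel \<and> prob_space \<mu> \<and> integrable \<mu> (\<lambda>x. x\<^sup>2)"

text \<open>Centred Gaussian N(0, sigma^2) (sigma = standard deviation).\<close>
definition gaussian :: "real \<Rightarrow> real measure" where
  "gaussian \<sigma> = density lborel (\<lambda>x. ennreal (normal_density 0 \<sigma> x))"

text \<open>Quantile function (generalised inverse of the cdf), used for u in (0,1).\<close>
definition quantile :: "real measure \<Rightarrow> real \<Rightarrow> real" where
  "quantile \<mu> u = Inf {x. u \<le> cdf \<mu> x}"

text \<open>Energy of a curve: integral over t in [0,1] of the squared L2[0,1]-norm of the
  second time derivative of the quantile functions.  The second derivative is taken in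
  the weak sense: A is a square integrable function of (t,u) such that for a.e. u,
  Q(t,u) = Q(0,u) + t V(u) + int_0^t (t-s) A(s,u) ds on [0,1].  If no such A exists the
  energy is infinite (Inf of the empty set).\<close>
definition spline_energy :: "(real \<Rightarrow> real measure) \<Rightarrow> ennreal" where
  "spline_energy \<mu> = Inf {(\<integral>\<^sup>+ p. indicator ({0..1} \<times> {0<..<1}) p * ennreal ((A (fst p) (snd p))\<^sup>2) \<partial>lborel)
      | A :: real \<Rightarrow> real \<Rightarrow> real.
        (\<lambda>p. A (fst p) (snd p)) \<in> borel_measurable lborel \<and>
        (\<exists>V :: real \<Rightarrow> real. AE u in lborel. u \<in> {0<..<1} \<longrightarrow>
            set_integrable lborel {0..1} (\<lambda>s. A s u) \<and>
            (\<forall>t\<in>{0..1}. quantile (\<mu> t) u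
               = quantile (\<mu> 0) u + t * V u + (LBINT s:{0..t}. (t - s) * A s u)))}"

definition is_E_spline ::
  "(nat \<Rightarrow> real) \<Rightarrow> nat \<Rightarrow> (nat \<Rightarrow> real measure) \<Rightarrow> (real \<Rightarrow> real measure) \<Rightarrow> bool" where
  "is_E_spline tk N data \<mu> \<longleftrightarrow>
     (\<forall>t\<in>{0..1}. P2 (\<mu> t)) \<and> (\<forall>i\<le>N. \<mu> (tk i) = data i) \<and>
     (\<forall>\<nu>. (\<forall>t\<in>{0..1}. P2 (\<nu> t)) \<and> (\<forall>i\<le>N. \<nu> (tk i) = data i)
          \<longrightarrow> spline_energy \<mu> \<le> spline_energy \<nu>)"

definition monge_map :: "real measure \<Rightarrow> real measure \<Rightarrow> (real \<Rightarrow> real) \<Rightarrow> bool" where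
  "monge_map \<mu> \<nu> T \<longleftrightarrow> T \<in> borel_measurable \<mu> \<and> distr \<mu> borel T = \<nu> \<and>
     (\<forall>S \<in> borel_measurable \<mu>. distr \<mu> borel S = \<nu> \<longrightarrow>
        (\<integral>\<^sup>+ x. ennreal ((x - T x)\<^sup>2) \<partial>\<mu>) \<le> (\<integral>\<^sup>+ x. ennreal ((x - S x)\<^sup>2) \<partial>\<mu>))"

definition nat_cubic_spline ::
  "(nat \<Rightarrow> real) \<Rightarrow> nat \<Rightarrow> (nat \<Rightarrow> real) \<Rightarrow> (real \<Rightarrow> real) \<Rightarrow> bool" where
  "nat_cubic_spline tk N y s \<longleftrightarrow>
     (\<forall>i\<le>N. s (tk i) = y i) \<and>
     (\<forall>i\<in>{1..N}. \<exists>a b c d. \<forall>t\<in>{tk (i - 1)..tk i}. s t = a + b * t + c * t ^ 2 + d * t ^ 3) \<and>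
     (\<exists>s1 s2. (\<forall>t\<in>{tk 0..tk N}.
                 (s has_real_derivative s1 t) (at t within {tk 0..tk N}) \<and>
                 (s1 has_real_derivative s2 t) (at t within {tk 0..tk N})) \<and>
              continuous_on {tk 0..tk N} s2 \<and> s2 (tk 0) = 0 \<and> s2 (tk N) = 0)"

fun iter_maps :: "(nat \<Rightarrow> real \<Rightarrow> real) \<Rightarrow> nat \<Rightarrow> real \<Rightarrow> real" where
  "iter_maps T 0 x = x"
| "iter_maps T (Suc i) x = T (Suc i) (iter_maps T i x)"

text \<open>Transport spline: Y_0 ~ data 0 (realised as the identity on the probability space
  data 0), Y_{t_i} obtained by Monge maps, Y_t the natural cubic spline in t, mu_t = law(Y_t).\<close>
definition is_transport_spline ::
  "(nat \<Rightarrow> real) \<Rightarrow> nat \<Rightarrow> (nat \<Rightarrow> real measure) \<Rightarrow> (real \<Rightarrow> real measure) \<Rightarrow> bool" where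
  "is_transport_spline tk N data \<mu> \<longleftrightarrow>
     (\<exists>T Y. (\<forall>i\<in>{1..N}. monge_map (data (i - 1)) (data i) (T i)) \<and>
            (\<forall>\<omega>. nat_cubic_spline tk N (\<lambda>i. iter_maps T i \<omega>) (\<lambda>t. Y t \<omega>)) \<and>
            (\<forall>t\<in>{0..1}. \<mu> t = distr (data 0) borel (Y t)))"

end

theory Submission
  imports Defs
begin

lemma gauss_prob: "0 < s \<Longrightarrow> prob_space (gaussian s)"
  unfolding gaussian_def by (rule prob_space_normal_density)

lemma sets_gauss[simp, measurable_cong]: "sets (gaussian s) = sets borel"
  by (simp add: gaussian_def)

lemma space_gauss[simp]: "space (gaussian s) = UNIV"
  by (simp add: gaussian_def)

lemma gauss_scale:
  assumes a: "0 < a" and c: "c \<noteq> 0"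
  shows "distr (gaussian a) borel (\<lambda>x. c * x) = gaussian (\<bar>c\<bar> * a)"
proof -
  interpret prob_space "gaussian a" by (rule gauss_prob[OF a])
  have "distributed (gaussian a) lborel (\<lambda>x. x) (normal_density 0 a)"
    unfolding distributed_def by (auto simp: distr_id2 gaussian_def)
  from normal_density_affine[OF this a c, of 0]
  have "distributed (gaussian a) lborel (\<lambda>x. c * x) (normal_density 0 (\<bar>c\<bar> * a))" by simp
  then have "distr (gaussian a) lborel (\<lambda>x. c * x) = gaussian (\<bar>c\<bar> * a)"
    unfolding distributed_def gaussian_def by simp
  moreover have "distr (gaussian a) borel (\<lambda>x. c * x) = distr (gaussian a) lborel (\<lambda>x. c * x)"
    by (rule distr_cong) auto
  ultimately show ?thesis by simp
qed

lemma gauss_sq: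
  assumes "0 < a"
  shows "integrable (gaussian a) (\<lambda>x. x\<^sup>2)" "integral\<^sup>L (gaussian a) (\<lambda>x. x\<^sup>2) = a\<^sup>2"
proof -
  have h: "has_bochner_integral lborel (\<lambda>x. normal_density 0 a x * x\<^sup>2) (a\<^sup>2)"
    using normal_moment_even[where \<mu>=0 and \<sigma>=a and k=1] assms by (simp add: power2_eq_square)
  show "integrable (gaussian a) (\<lambda>x. x\<^sup>2)"
    unfolding gaussian_def using h
    by (subst integrable_density) (auto simp: has_bochner_integral_iff)
  show "integral\<^sup>L (gaussian a) (\<lambda>x. x\<^sup>2) = a\<^sup>2"
    unfolding gaussian_def using h
    by (subst integral_density) (auto simp: has_bochner_integral_iff)
qed

lemma P2_gauss: "0 < a \<Longrightarrow> P2 (gaussian a)"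
  unfolding P2_def using gauss_prob gauss_sq by auto


lemma monge_gauss:
  assumes a: "0 < a" and b: "0 < b" and T: "monge_map (gaussian a) (gaussian b) T"
  shows "AE x in gaussian a. T x = (b/a) * x"
proof -
  define M where "M = gaussian a"
  define k where "k = b / a"
  have k: "0 < k" using a b by (simp add: k_def)
  interpret prob_space M unfolding M_def by (rule gauss_prob[OF a])
  have sM[measurable_cong]: "sets M = sets borel" by (simp add: M_def)
  have Tm[measurable]: "T \<in> borel_measurable M" and Td: "distr M borel T = gaussian b"
    and opt: "\<And>S. S \<in> borel_measurable M \<Longrightarrow> distr M borel S = gaussian b \<Longrightarrow>
        (\<integral>\<^sup>+ x. ennreal ((x - T x)\<^sup>2) \<partial>M) \<le> (\<integral>\<^sup>+ x. ennreal ((x - S x)\<^sup>2) \<partial>M)"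
    using T unfolding monge_map_def M_def by auto
  have Sd: "distr M borel (\<lambda>x. k * x) = gaussian b"
    unfolding M_def using gauss_scale[OF a, of k] k a b by (simp add: k_def)
  have iX: "integrable M (\<lambda>x. x\<^sup>2)" and IX: "integral\<^sup>L M (\<lambda>x. x\<^sup>2) = a\<^sup>2"
    using gauss_sq[OF a] by (auto simp: M_def)
  have iT: "integrable M (\<lambda>x. (T x)\<^sup>2)"
    using gauss_sq(1)[OF b] integrable_distr_eq[of T M borel "\<lambda>y. y\<^sup>2"] Td by simp
  have IT: "integral\<^sup>L M (\<lambda>x. (T x)\<^sup>2) = b\<^sup>2"
    using gauss_sq(2)[OF b] integral_distr[of T M borel "\<lambda>y. y\<^sup>2"] Td by simp
  have iD: "integrable M (\<lambda>x. (x - T x)\<^sup>2)"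
  proof (rule Bochner_Integration.integrable_bound[of _ "\<lambda>x. 2 * x\<^sup>2 + 2 * (T x)\<^sup>2"])
    show "integrable M (\<lambda>x. 2 * x\<^sup>2 + 2 * (T x)\<^sup>2)" using iX iT by auto
    show "AE x in M. norm ((x - T x)\<^sup>2) \<le> norm (2 * x\<^sup>2 + 2 * (T x)\<^sup>2)"
    proof (intro AE_I2)
      fix x :: real
      have e: "2 * x\<^sup>2 + 2 * (T x)\<^sup>2 = (x - T x)\<^sup>2 + (x + T x)\<^sup>2"
        by (simp add: power2_eq_square algebra_simps)
      have "0 \<le> (x + T x)\<^sup>2" by simp
      then show "norm ((x - T x)\<^sup>2) \<le> norm (2 * x\<^sup>2 + 2 * (T x)\<^sup>2)"
        unfolding e by simp
    qed
  qed measurable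
  have cT: "(\<integral>\<^sup>+ x. ennreal ((x - T x)\<^sup>2) \<partial>M) = ennreal (integral\<^sup>L M (\<lambda>x. (x - T x)\<^sup>2))"
    by (rule nn_integral_eq_integral[OF iD]) auto
  have cS: "(\<integral>\<^sup>+ x. ennreal ((x - k * x)\<^sup>2) \<partial>M) = ennreal ((1 - k)\<^sup>2 * a\<^sup>2)"
  proof -
    have "(\<lambda>x. ennreal ((x - k * x)\<^sup>2)) = (\<lambda>x. ennreal ((1 - k)\<^sup>2 * x\<^sup>2))"
      by (auto simp: power2_eq_square algebra_simps)
    moreover have "(\<integral>\<^sup>+ x. ennreal ((1 - k)\<^sup>2 * x\<^sup>2) \<partial>M) = ennreal (integral\<^sup>L M (\<lambda>x. (1 - k)\<^sup>2 * x\<^sup>2))"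
      by (rule nn_integral_eq_integral) (use iX in auto)
    ultimately show ?thesis using IX by simp
  qed
  have "ennreal (integral\<^sup>L M (\<lambda>x. (x - T x)\<^sup>2)) \<le> ennreal ((1 - k)\<^sup>2 * a\<^sup>2)"
    using opt[of "\<lambda>x. k * x"] Sd cT cS by simp
  then have ID: "integral\<^sup>L M (\<lambda>x. (x - T x)\<^sup>2) \<le> (1 - k)\<^sup>2 * a\<^sup>2"
    by (subst (asm) ennreal_le_iff) auto
  have eq: "(\<lambda>x. (T x - k * x)\<^sup>2) = (\<lambda>x. (1 - k) * (T x)\<^sup>2 + (k\<^sup>2 - k) * x\<^sup>2 + k * (x - T x)\<^sup>2)"
    by (auto simp: power2_eq_square algebra_simps)
  have iE: "integrable M (\<lambda>x. (T x - k * x)\<^sup>2)"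
    unfolding eq using iX iT iD by auto
  have "integral\<^sup>L M (\<lambda>x. (T x - k * x)\<^sup>2)
      = (1 - k) * b\<^sup>2 + (k\<^sup>2 - k) * a\<^sup>2 + k * integral\<^sup>L M (\<lambda>x. (x - T x)\<^sup>2)"
    unfolding eq using iX iT iD IX IT by simp
  also have "\<dots> \<le> (1 - k) * b\<^sup>2 + (k\<^sup>2 - k) * a\<^sup>2 + k * ((1 - k)\<^sup>2 * a\<^sup>2)"
    using ID k by simp
  also have "\<dots> = 0"
    using a by (simp add: k_def power2_eq_square field_simps)
  finally have "integral\<^sup>L M (\<lambda>x. (T x - k * x)\<^sup>2) \<le> 0" .
  moreover have "integral\<^sup>L M (\<lambda>x. (T x - k * x)\<^sup>2) \<ge> 0" by simp
  ultimately have "integral\<^sup>L M (\<lambda>x. (T x - k * x)\<^sup>2) = 0" by linarith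
  then have "AE x in M. (T x - k * x)\<^sup>2 = 0"
    using integral_nonneg_eq_0_iff_AE[OF iE] by simp
  then show ?thesis unfolding M_def k_def by eventually_elim simp
qed

abbreviation q :: "real \<Rightarrow> real" where "q \<equiv> quantile (gaussian 1)"

lemma quantile_char: assumes "\<And>x. u \<le> cdf \<mu> x \<longleftrightarrow> a \<le> x" shows "quantile \<mu> u = a"
proof -
  have "{x. u \<le> cdf \<mu> x} = {a..}" using assms by auto
  then show ?thesis unfolding quantile_def by simp
qed

lemma gauss1_cdfd: "cdf_distribution (gaussian 1)"
  unfolding cdf_distribution_def real_distribution_def real_distribution_axioms_def
  using gauss_prob[of 1] by simp

lemma q_pseudo: assumes "0 < u" "u < 1" shows "u \<le> cdf (gaussian 1) x \<longleftrightarrow> q u \<le> x"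
proof -
  interpret cdf_distribution "gaussian 1" by (rule gauss1_cdfd)
  show ?thesis using pseudoinverse[OF assms] unfolding quantile_def by blast
qed

lemma cdf_scaled:
  assumes "0 < c"
  shows "cdf (distr (gaussian 1) borel (\<lambda>x. c * x)) x = cdf (gaussian 1) (x / c)"
proof -
  have "(\<lambda>y. c * y) -` {..x} = {..x/c}" using assms by (auto simp: field_simps)
  then show ?thesis unfolding cdf_def by (subst measure_distr) auto
qed

lemma quantile_pos:
  assumes c: "0 < c" and u: "0 < u" "u < 1"
  shows "quantile (distr (gaussian 1) borel (\<lambda>x. c * x)) u = c * q u"
proof (rule quantile_char)
  fix x
  show "u \<le> cdf (distr (gaussian 1) borel (\<lambda>x. c * x)) x \<longleftrightarrow> c * q u \<le> x"
    unfolding cdf_scaled[OF c] q_pseudo[OF u] using c by (simp add: field_simps)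
qed

lemma quantile_lin:
  assumes u: "0 < u" "u < 1"
  shows "quantile (distr (gaussian 1) borel (\<lambda>x. c * x)) u = \<bar>c\<bar> * q u"
proof (cases "c = 0")
  case True
  interpret prob_space "gaussian 1" by (rule gauss_prob) simp
  have "cdf (distr (gaussian 1) borel (\<lambda>x. 0)) x = (if 0 \<le> x then 1 else 0)" for x
    unfolding cdf_def by (subst measure_distr) (auto simp: prob_space[simplified])
  then have "quantile (distr (gaussian 1) borel (\<lambda>x. 0)) u = 0"
    using u by (intro quantile_char) auto
  then show ?thesis using True by simp
next
  case False
  have "distr (gaussian 1) borel (\<lambda>x. c * x) = gaussian \<bar>c\<bar>"
    using gauss_scale[of 1 c] False by simp
  also have "\<dots> = distr (gaussian 1) borel (\<lambda>x. \<bar>c\<bar> * x)"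
    using gauss_scale[of 1 "\<bar>c\<bar>"] False by simp
  finally show ?thesis using quantile_pos[of "\<bar>c\<bar>" u] u False by simp
qed

lemma quantile_gauss:
  assumes "0 < s" "0 < u" "u < 1"
  shows "quantile (gaussian s) u = s * q u"
  using gauss_scale[of 1 s] quantile_lin[of u s] assms by simp

lemma q_zero:
  assumes u: "0 < u" "u < 1" and z: "q u = 0"
  shows "u = cdf (gaussian 1) 0"
proof -
  interpret cdf_distribution "gaussian 1" by (rule gauss1_cdfd)
  have le: "u \<le> cdf (gaussian 1) 0" using q_pseudo[OF u, of 0] z by simp
  have lt: "cdf (gaussian 1) x < u" if "x < 0" for x
    using q_pseudo[OF u, of x] z that by simp
  have "emeasure (gaussian 1) {0} = 0"
  proof -
    have "emeasure (gaussian 1) {0} = (\<integral>\<^sup>+ x. ennreal (normal_density 0 1 x) * indicator {0} x \<partial>lborel)"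
      unfolding gaussian_def by (subst emeasure_density) auto
    also have "\<dots> = (\<integral>\<^sup>+ x. 0 \<partial>(lborel::real measure))"
    proof (rule nn_integral_cong_AE)
      show "AE x in lborel. ennreal (normal_density 0 1 x) * indicator {0} x = 0"
        using AE_lborel_singleton[of "0::real"] by eventually_elim simp
    qed
    finally show ?thesis by simp
  qed
  then have "measure (gaussian 1) {0} = 0" by (simp add: measure_def)
  then have "isCont (cdf (gaussian 1)) 0" by (simp add: isCont_cdf)
  then have "(cdf (gaussian 1) \<longlongrightarrow> cdf (gaussian 1) 0) (at_left 0)"
    by (simp add: isCont_def filterlim_at_split)
  moreover have "eventually (\<lambda>x. cdf (gaussian 1) x \<le> u) (at_left (0::real))"
    unfolding eventually_at_left_field using lt by (auto intro!: exI[of _ "-1"] less_imp_le)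
  ultimately have "cdf (gaussian 1) 0 \<le> u"
    by (rule tendsto_le[OF _ tendsto_const, rotated]) simp
  with le show ?thesis by simp
qed

definition sig :: "real \<Rightarrow> real \<Rightarrow> real" where
  "sig d t = d + (1 - d) * (1 - 9/2 * t * (1 - t))\<^sup>2"

definition sig2 :: "real \<Rightarrow> real \<Rightarrow> real" where
  "sig2 d s = (1 - d) * (117/2 - 243 * s + 243 * s\<^sup>2)"

definition qq :: "real \<Rightarrow> real" where
  "qq u = (if u \<in> {0<..<1} then q u else 0)"

lemma sig_pos: "0 < d \<Longrightarrow> d \<le> 1 \<Longrightarrow> 0 < sig d t"
  unfolding sig_def by (intro add_pos_nonneg) auto

lemma sig_knots: "sig d 0 = 1" "sig d (1/3) = d" "sig d (2/3) = d" "sig d 1 = 1"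
  unfolding sig_def by (simp_all add: power2_eq_square)

lemma taylor_sig:
  assumes t: "0 \<le> t"
  shows "(LBINT s:{0..t}. (t - s) * (sig2 d s * c)) = c * (sig d t - 1 + 9 * (1 - d) * t)"
proof -
  define K where "K = 1 - d"
  define F where "F s = c * K * ((t - s) * (117/2 * s - 243/2 * s\<^sup>2 + 81 * s^3)
        + (117/4 * s\<^sup>2 - 81/2 * s^3 + 81/4 * s^4))" for s
  have "(LBINT s:{0..t}. (t - s) * (sig2 d s * c)) = F t - F 0"
    unfolding set_lebesgue_integral_def
  proof (rule integral_FTC_atLeastAtMost[OF t])
    fix x assume "0 \<le> x" "x \<le> t"
    have "(F has_real_derivative (t - x) * (sig2 d x * c)) (at x within {0..t})"
      unfolding F_def sig2_def K_def
        apply (auto intro!: derivative_eq_intros)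
        done
    then show "(F has_vector_derivative (t - x) * (sig2 d x * c)) (at x within {0..t})"
      by (simp add: has_real_derivative_iff_has_vector_derivative)
  next
    show "continuous_on {0..t} (\<lambda>s. (t - s) * (sig2 d s * c))"
      unfolding sig2_def by (intro continuous_intros)
  qed
  also have "\<dots> = c * (sig d t - 1 + 9 * (1 - d) * t)"
    unfolding F_def sig_def K_def by (simp add: power2_eq_square power3_eq_cube power4_eq_xxxx field_simps)
  finally show ?thesis .
qed


lemma q_meas_restr: "q \<in> borel_measurable (restrict_space lborel {0<..<1})"
proof -
  interpret cdf_distribution "gaussian 1" by (rule gauss1_cdfd)
  have "(\<lambda>x. Inf {y. x \<le> cdf (gaussian 1) y}) \<in> borel_measurable (restrict_space borel {0<..<1})"
    by (rule measurable_CI)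
  moreover have "borel_measurable (restrict_space borel {0<..<1::real}) = borel_measurable (restrict_space lborel {0<..<1})"
    by (rule measurable_cong_sets) (simp_all add: sets_restrict_space)
  ultimately show ?thesis unfolding quantile_def by simp
qed

lemma qq_meas[measurable]: "qq \<in> borel_measurable borel"
proof -
  have "borel_measurable (restrict_space borel {0<..<1::real}) = borel_measurable (restrict_space lborel {0<..<1})"
    by (rule measurable_cong_sets) (simp_all add: sets_restrict_space)
  then have "q \<in> borel_measurable (restrict_space borel {0<..<1})"
    using q_meas_restr by simp
  then show ?thesis unfolding qq_def
    by (subst (asm) measurable_restrict_space_iff) auto
qed

lemma J: "(\<integral>\<^sup>+ u. ennreal ((q u)\<^sup>2) * indicator {0<..<1} u \<partial>lborel) = 1"
proof -
  interpret cdf_distribution "gaussian 1" by (rule gauss1_cdfd)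
  have "(\<integral>\<^sup>+ u. ennreal ((q u)\<^sup>2) * indicator {0<..<1} u \<partial>lborel)
      = (\<integral>\<^sup>+ u. ennreal ((q u)\<^sup>2) \<partial>restrict_space lborel {0<..<1})"
    by (subst nn_integral_restrict_space) auto
  also have "\<dots> = (\<integral>\<^sup>+ x. ennreal (x\<^sup>2) \<partial>distr (restrict_space lborel {0<..<1}) borel q)"
    by (subst nn_integral_distr[OF q_meas_restr]) auto
  also have "distr (restrict_space lborel {0<..<1}) borel q = gaussian 1"
    using distr_I_eq_M unfolding quantile_def .
  also have "(\<integral>\<^sup>+ x. ennreal (x\<^sup>2) \<partial>gaussian 1) = ennreal 1"
    using gauss_sq[of 1] by (subst nn_integral_eq_integral) auto
  finally show ?thesis by simp
qed

lemma sig2_bound: "0 < d \<Longrightarrow> d \<le> 1 \<Longrightarrow> s \<in> {0..1} \<Longrightarrow> (sig2 d s)\<^sup>2 \<le> 360000"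
proof -
  assume d: "0 < d" "d \<le> 1" and s: "s \<in> {0..1}"
  have "s\<^sup>2 \<le> 1" using s by (simp add: power_le_one)
  moreover have "0 \<le> s\<^sup>2" by simp
  moreover have "0 \<le> s" "s \<le> 1" using s by auto
  ultimately have "117/2 - 243 * s + 243 * s\<^sup>2 \<le> 600" "-(117/2 - 243 * s + 243 * s\<^sup>2) \<le> 600"
    by linarith+
  then have "\<bar>117/2 - 243 * s + 243 * s\<^sup>2\<bar> \<le> 600" unfolding abs_le_iff by blast
  moreover have "\<bar>1 - d\<bar> \<le> 1" using d by auto
  ultimately have "\<bar>1 - d\<bar> * \<bar>117/2 - 243 * s + 243 * s\<^sup>2\<bar> \<le> 1 * 600"
    by (intro mult_mono) auto
  then have "\<bar>sig2 d s\<bar> \<le> 600" unfolding sig2_def abs_mult by simp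
  then have "\<bar>sig2 d s\<bar>\<^sup>2 \<le> 600\<^sup>2" by (rule power_mono) simp
  then show ?thesis by simp
qed

lemma energy_fin:
  assumes d: "0 < d" "d \<le> 1"
  shows "(\<integral>\<^sup>+ p. indicator ({0..1} \<times> {0<..<1}) p * ennreal ((sig2 d (fst p) * qq (snd p))\<^sup>2) \<partial>lborel) < \<top>"
proof -
  define g where "g u = ennreal ((q u)\<^sup>2) * indicator {0<..<1} u" for u
  have gm[measurable]: "g \<in> borel_measurable borel"
  proof -
    have "g = (\<lambda>u. ennreal ((qq u)\<^sup>2) * indicator {0<..<1} u)"
      by (auto simp: g_def qq_def fun_eq_iff indicator_def)
    then show ?thesis by simp
  qed
  have le: "indicator ({0..1} \<times> {0<..<1}) p * ennreal ((sig2 d (fst p) * qq (snd p))\<^sup>2)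
      \<le> ennreal 360000 * (indicator {0..1::real} (fst p) * g (snd p))" for p :: "real \<times> real"
  proof (cases "fst p \<in> {0..1} \<and> snd p \<in> {0<..<1}")
    case True
    then have "(sig2 d (fst p) * qq (snd p))\<^sup>2 \<le> 360000 * (q (snd p))\<^sup>2"
      using sig2_bound[OF d, of "fst p"] by (auto simp: qq_def power_mult_distrib intro!: mult_right_mono)
    then have "ennreal ((sig2 d (fst p) * qq (snd p))\<^sup>2) \<le> ennreal (360000 * (q (snd p))\<^sup>2)"
      by (rule ennreal_leI)
    also have "\<dots> = ennreal 360000 * ennreal ((q (snd p))\<^sup>2)"
      by (rule ennreal_mult) auto
    finally show ?thesis using True
      by (cases p) (auto simp: g_def indicator_def)
  next
    case False
    then show ?thesis by (cases p) (auto simp: indicator_def)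
  qed
  have "(\<integral>\<^sup>+ p. indicator ({0..1} \<times> {0<..<1}) p * ennreal ((sig2 d (fst p) * qq (snd p))\<^sup>2) \<partial>lborel)
      \<le> (\<integral>\<^sup>+ p. ennreal 360000 * (indicator {0..1::real} (fst p) * g (snd p)) \<partial>(lborel :: (real \<times> real) measure))"
    by (rule nn_integral_mono, rule le)
  also have "\<dots> = ennreal 360000 * (\<integral>\<^sup>+ p. indicator {0..1::real} (fst p) * g (snd p) \<partial>(lborel :: (real \<times> real) measure))"
  proof -
    have m: "(\<lambda>p. indicator {0..1::real} (fst p) * g (snd p)) \<in> borel_measurable ((lborel::real measure) \<Otimes>\<^sub>M (lborel::real measure))"
      by measurable
    then have "(\<lambda>p. indicator {0..1::real} (fst p) * g (snd p)) \<in> borel_measurable (lborel :: (real \<times> real) measure)"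
      by (simp only: lborel_prod)
    then show ?thesis by (rule nn_integral_cmult)
  qed
  also have "(\<integral>\<^sup>+ p. indicator {0..1::real} (fst p) * g (snd p) \<partial>(lborel :: (real \<times> real) measure))
      = (\<integral>\<^sup>+ p. indicator {0..1::real} (fst p) * g (snd p) \<partial>(lborel \<Otimes>\<^sub>M lborel))"
    by (simp add: lborel_prod)
  also have "\<dots> = (\<integral>\<^sup>+ s. \<integral>\<^sup>+ u. indicator {0..1::real} s * g u \<partial>lborel \<partial>lborel)"
  proof -
    have m: "(\<lambda>p. indicator {0..1::real} (fst p) * g (snd p)) \<in> borel_measurable ((lborel::real measure) \<Otimes>\<^sub>M (lborel::real measure))"
      by measurable
    show ?thesis using lborel.nn_integral_fst[OF m] by simp
  qed
  also have "\<dots> = (\<integral>\<^sup>+ s. indicator {0..1::real} s * (\<integral>\<^sup>+ u. g u \<partial>lborel) \<partial>lborel)"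
    by (rule nn_integral_cong) (rule nn_integral_cmult, measurable)
  also have "(\<integral>\<^sup>+ u. g u \<partial>lborel) = 1" unfolding g_def by (rule J)
  also have "(\<integral>\<^sup>+ s. indicator {0..1::real} s * 1 \<partial>(lborel::real measure)) = 1" by simp
  finally show ?thesis by (rule order.strict_trans1) (simp only: mult_1_right ennreal_less_top)
qed

lemma deriv_unique_Icc:
  fixes f :: "real \<Rightarrow> real"
  assumes "l < r" "x \<in> {l..r}"
    "(f has_real_derivative A) (at x within {l..r})"
    "(f has_real_derivative B) (at x within {l..r})"
  shows "A = B"
  using vector_derivative_unique_within_closed_interval[of l r x f A B] assms
  by (simp add: has_real_derivative_iff_has_vector_derivative)

lemma piece_deriv:
  fixes f s1 s2 :: "real \<Rightarrow> real"
  assumes lr: "l < r" and sub: "{l..r} \<subseteq> S"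
    and D: "\<forall>t\<in>S. (f has_real_derivative s1 t) (at t within S) \<and> (s1 has_real_derivative s2 t) (at t within S)"
    and P: "\<forall>t\<in>{l..r}. f t = a + b*t + c*t^2 + d*t^3"
    and t: "t \<in> {l..r}"
  shows "s1 t = b + 2*c*t + 3*d*t^2 \<and> s2 t = 2*c + 6*d*t"
proof -
  have d1: "s1 x = b + 2*c*x + 3*d*x^2" if x: "x \<in> {l..r}" for x
  proof -
    have "(f has_real_derivative s1 x) (at x within {l..r})"
      using D sub x by (meson has_field_derivative_subset subsetD)
    then have "((\<lambda>t. a + b*t + c*t^2 + d*t^3) has_real_derivative s1 x) (at x within {l..r})"
      by (rule has_field_derivative_transform_within[where d=1]) (use x P in auto)
    moreover have "((\<lambda>t. a + b*t + c*t^2 + d*t^3) has_real_derivative (b + 2*c*x + 3*d*x^2)) (at x within {l..r})"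
      by (auto intro!: derivative_eq_intros simp: power2_eq_square)
    ultimately show ?thesis using deriv_unique_Icc[OF lr x] by blast
  qed
  have "(s1 has_real_derivative s2 t) (at t within {l..r})"
    using D sub t by (meson has_field_derivative_subset subsetD)
  then have "((\<lambda>x. b + 2*c*x + 3*d*x^2) has_real_derivative s2 t) (at t within {l..r})"
    by (rule has_field_derivative_transform_within[where d=1]) (use t d1 in auto)
  moreover have "((\<lambda>x. b + 2*c*x + 3*d*x^2) has_real_derivative (2*c + 6*d*t)) (at t within {l..r})"
    by (auto intro!: derivative_eq_intros simp: power2_eq_square)
  ultimately show ?thesis using deriv_unique_Icc[OF lr t] d1[OF t] by blast
qed

lemma solve_mid:
  fixes a1 b1 c1 d1 a2 b2 c2 d2 a3 b3 c3 d3 y0 y1 y2 y3 :: real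
  assumes "a1 = y0"
    "a1 + b1*(1/3) + c1*(1/3)^2 + d1*(1/3)^3 = y1"
    "a2 + b2*(1/3) + c2*(1/3)^2 + d2*(1/3)^3 = y1"
    "a2 + b2*(2/3) + c2*(2/3)^2 + d2*(2/3)^3 = y2"
    "a3 + b3*(2/3) + c3*(2/3)^2 + d3*(2/3)^3 = y2"
    "a3 + b3 + c3 + d3 = y3"
    "b1 + 2*c1*(1/3) + 3*d1*(1/3)^2 = b2 + 2*c2*(1/3) + 3*d2*(1/3)^2"
    "b2 + 2*c2*(2/3) + 3*d2*(2/3)^2 = b3 + 2*c3*(2/3) + 3*d3*(2/3)^2"
    "2*c1 + 6*d1*(1/3) = 2*c2 + 6*d2*(1/3)"
    "2*c2 + 6*d2*(2/3) = 2*c3 + 6*d3*(2/3)"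
    "2*c1 = 0" "2*c3 + 6*d3 = 0"
  shows "a2 = (8*y0 - 8*y1 + 7*y2 - 2*y3)/5 \<and> b2 = (-46*y0 + 96*y1 - 69*y2 + 19*y3)/5 \<and>
         c2 = (81*y0 - 216*y1 + 189*y2 - 54*y3)/5 \<and> d2 = -9*y0 + 27*y1 - 27*y2 + 9*y3"
  using assms by (simp add: power2_eq_square power3_eq_cube)

definition mid :: "real \<Rightarrow> real \<Rightarrow> real \<Rightarrow> real \<Rightarrow> real \<Rightarrow> real" where
  "mid y0 y1 y2 y3 t = (8*y0 - 8*y1 + 7*y2 - 2*y3)/5 + (-46*y0 + 96*y1 - 69*y2 + 19*y3)/5 * t
     + (81*y0 - 216*y1 + 189*y2 - 54*y3)/5 * t^2 + (-9*y0 + 27*y1 - 27*y2 + 9*y3) * t^3"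

lemma spline_mid:
  assumes sp: "nat_cubic_spline (\<lambda>i. real i / 3) 3 y f" and t: "t \<in> {1/3..2/3}"
  shows "f t = mid (y 0) (y 1) (y 2) (y 3) t"
proof -
  have kn: "\<forall>i\<le>3. f (real i / 3) = y i"
    and pc: "\<forall>i\<in>{1..3}. \<exists>a b c d. \<forall>t\<in>{real (i - 1) / 3..real i / 3}. f t = a + b * t + c * t ^ 2 + d * t ^ 3"
    and "\<exists>s1 s2. (\<forall>t\<in>{0..1}. (f has_real_derivative s1 t) (at t within {0..1}) \<and>
                 (s1 has_real_derivative s2 t) (at t within {0..1})) \<and>
              continuous_on {0..1} s2 \<and> s2 0 = 0 \<and> s2 1 = 0"
    using sp unfolding nat_cubic_spline_def by auto
  then obtain s1 s2 where D: "\<forall>t\<in>{0..1}. (f has_real_derivative s1 t) (at t within {0..1}) \<and>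
                 (s1 has_real_derivative s2 t) (at t within {0..1})" and z: "s2 0 = 0" "s2 1 = 0"
    by blast
  obtain a1 b1 c1 d1 where P1: "\<forall>t\<in>{0..1/3}. f t = a1 + b1 * t + c1 * t ^ 2 + d1 * t ^ 3"
    using pc[rule_format, of 1] by auto
  obtain a2 b2 c2 d2 where P2: "\<forall>t\<in>{1/3..2/3}. f t = a2 + b2 * t + c2 * t ^ 2 + d2 * t ^ 3"
    using pc[rule_format, of 2] by auto
  obtain a3 b3 c3 d3 where P3: "\<forall>t\<in>{2/3..1}. f t = a3 + b3 * t + c3 * t ^ 2 + d3 * t ^ 3"
    using pc[rule_format, of 3] by auto
  have k0: "f 0 = y 0" and k1: "f (1/3) = y 1" and k2: "f (2/3) = y 2" and k3: "f 1 = y 3"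
    using kn[rule_format, of 0] kn[rule_format, of 1] kn[rule_format, of 2] kn[rule_format, of 3] by auto
  note pd = piece_deriv[OF _ _ D]
  have A: "s1 0 = b1 + 2*c1*0 + 3*d1*0^2 \<and> s2 0 = 2*c1 + 6*d1*0"
    by (rule pd[OF _ _ P1]) auto
  have B: "s1 (1/3) = b1 + 2*c1*(1/3) + 3*d1*(1/3)^2 \<and> s2 (1/3) = 2*c1 + 6*d1*(1/3)"
    by (rule pd[OF _ _ P1]) auto
  have C: "s1 (1/3) = b2 + 2*c2*(1/3) + 3*d2*(1/3)^2 \<and> s2 (1/3) = 2*c2 + 6*d2*(1/3)"
    by (rule pd[OF _ _ P2]) auto
  have E: "s1 (2/3) = b2 + 2*c2*(2/3) + 3*d2*(2/3)^2 \<and> s2 (2/3) = 2*c2 + 6*d2*(2/3)"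
    by (rule pd[OF _ _ P2]) auto
  have F: "s1 (2/3) = b3 + 2*c3*(2/3) + 3*d3*(2/3)^2 \<and> s2 (2/3) = 2*c3 + 6*d3*(2/3)"
    by (rule pd[OF _ _ P3]) auto
  have G: "s1 1 = b3 + 2*c3*1 + 3*d3*1^2 \<and> s2 1 = 2*c3 + 6*d3*1"
    by (rule pd[OF _ _ P3]) auto
  have v1: "a1 = y 0" using P1 k0 by auto
  have v2: "a1 + b1*(1/3) + c1*(1/3)^2 + d1*(1/3)^3 = y 1" using P1 k1 by auto
  have v3: "a2 + b2*(1/3) + c2*(1/3)^2 + d2*(1/3)^3 = y 1" using P2 k1 by auto
  have v4: "a2 + b2*(2/3) + c2*(2/3)^2 + d2*(2/3)^3 = y 2" using P2 k2 by auto
  have v5: "a3 + b3*(2/3) + c3*(2/3)^2 + d3*(2/3)^3 = y 2" using P3 k2 by auto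
  have v6: "a3 + b3 + c3 + d3 = y 3" using P3 k3 by auto
  have sol: "a2 = (8*y 0 - 8*y 1 + 7*y 2 - 2*y 3)/5 \<and> b2 = (-46*y 0 + 96*y 1 - 69*y 2 + 19*y 3)/5 \<and>
         c2 = (81*y 0 - 216*y 1 + 189*y 2 - 54*y 3)/5 \<and> d2 = -9*y 0 + 27*y 1 - 27*y 2 + 9*y 3"
    by (rule solve_mid[OF v1 v2 v3 v4 v5 v6]) (use A B C E F G z in auto)
  show ?thesis using P2 t sol unfolding mid_def by auto
qed

lemma hat_bound:
  fixes t h s :: real
  assumes h: "0 < h" "0 \<le> t - h"
  shows "\<bar>indicator {0..t+h} s * (t + h - s) + indicator {0..t-h} s * (t - h - s) - 2 * (indicator {0..t} s * (t - s))\<bar>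
     \<le> h * indicator {t-h..t+h} s"
  using h by (auto simp: indicator_def)

lemma G_integrable:
  fixes a :: "real \<Rightarrow> real"
  assumes int: "set_integrable lborel {0..1} a" and x: "0 \<le> x" "x \<le> 1"
  shows "integrable lborel (\<lambda>s. indicator {0..x} s * ((x - s) * a s))"
proof -
  have ia: "integrable lborel (\<lambda>s. indicator {0..1} s * a s)"
    using int by (simp add: set_integrable_def)
  have eq: "(\<lambda>s. indicator {0..x} s * ((x - s) * a s)) = (\<lambda>s. (indicator {0..x} s * (x - s)) * (indicator {0..1} s * a s))"
    using x by (auto simp: fun_eq_iff indicator_def)
  show ?thesis unfolding eq
  proof (rule Bochner_Integration.integrable_bound[OF ia])
    show "(\<lambda>s. indicator {0..x} s * (x - s) * (indicator {0..1} s * a s)) \<in> borel_measurable lborel"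
      using borel_measurable_integrable[OF ia] by measurable
    show "AE s in lborel. norm (indicator {0..x} s * (x - s) * (indicator {0..1} s * a s)) \<le> norm (indicator {0..1} s * a s)"
    proof (intro AE_I2)
      fix s
      have "\<bar>indicator {0..x} s * (x - s)\<bar> \<le> (1::real)" using x by (auto simp: indicator_def)
      then show "norm (indicator {0..x} s * (x - s) * (indicator {0..1} s * a s)) \<le> norm (indicator {0..1} s * a s)"
        by (simp add: abs_mult mult_left_le_one_le)
    qed
  qed
qed

lemma second_diff:
  fixes a :: "real \<Rightarrow> real"
  assumes int: "set_integrable lborel {0..1} a" and h: "0 < h" "0 \<le> t - h" "t + h \<le> 1"
  shows "\<bar>(LBINT s:{0..t+h}. (t + h - s) * a s) + (LBINT s:{0..t-h}. (t - h - s) * a s)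
          - 2 * (LBINT s:{0..t}. (t - s) * a s)\<bar>
       \<le> h * (LBINT s:{t-h..t+h}. \<bar>a s\<bar>)"
proof -
  let ?f = "\<lambda>x s. indicator {0..x} s * ((x - s) * a s)"
  have i1: "integrable lborel (?f (t+h))" and i2: "integrable lborel (?f (t-h))" and i3: "integrable lborel (?f t)"
    using G_integrable[OF int] h by auto
  have ia: "integrable lborel (\<lambda>s. indicator {0..1} s * a s)"
    using int by (simp add: set_integrable_def)
  have ib: "integrable lborel (\<lambda>s. indicator {t-h..t+h} s * \<bar>a s\<bar>)"
  proof -
    have "(\<lambda>s. indicator {t-h..t+h} s * \<bar>a s\<bar>) = (\<lambda>s. indicator {t-h..t+h} s * \<bar>indicator {0..1} s * a s\<bar>)"
      using h by (auto simp: fun_eq_iff indicator_def)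
    moreover have "integrable lborel (\<lambda>s. \<bar>indicator {0..1} s * a s\<bar> * indicator {t-h..t+h} s)"
      using ia by (intro integrable_real_mult_indicator integrable_abs) auto
    then have "integrable lborel (\<lambda>s. indicator {t-h..t+h} s * \<bar>indicator {0..1} s * a s\<bar>)"
      by (simp add: mult.commute)
    ultimately show ?thesis by simp
  qed
  have "(LBINT s:{0..t+h}. (t + h - s) * a s) + (LBINT s:{0..t-h}. (t - h - s) * a s)
          - 2 * (LBINT s:{0..t}. (t - s) * a s)
      = integral\<^sup>L lborel (\<lambda>s. ?f (t+h) s + ?f (t-h) s - 2 * ?f t s)"
    unfolding set_lebesgue_integral_def using i1 i2 i3 by simp
  also have "(\<lambda>s. ?f (t+h) s + ?f (t-h) s - 2 * ?f t s) = (\<lambda>s.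
      (indicator {0..t+h} s * (t + h - s) + indicator {0..t-h} s * (t - h - s) - 2 * (indicator {0..t} s * (t - s))) * a s)"
    by (auto simp: fun_eq_iff algebra_simps)
  finally have eq: "(LBINT s:{0..t+h}. (t + h - s) * a s) + (LBINT s:{0..t-h}. (t - h - s) * a s)
          - 2 * (LBINT s:{0..t}. (t - s) * a s) = integral\<^sup>L lborel (\<lambda>s.
      (indicator {0..t+h} s * (t + h - s) + indicator {0..t-h} s * (t - h - s) - 2 * (indicator {0..t} s * (t - s))) * a s)" .
  have iw: "integrable lborel (\<lambda>s.
      (indicator {0..t+h} s * (t + h - s) + indicator {0..t-h} s * (t - h - s) - 2 * (indicator {0..t} s * (t - s))) * a s)"
  proof -
    have "integrable lborel (\<lambda>s. ?f (t+h) s + ?f (t-h) s - 2 * ?f t s)" using i1 i2 i3 by simp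
    moreover have "(\<lambda>s. ?f (t+h) s + ?f (t-h) s - 2 * ?f t s) = (\<lambda>s.
      (indicator {0..t+h} s * (t + h - s) + indicator {0..t-h} s * (t - h - s) - 2 * (indicator {0..t} s * (t - s))) * a s)"
      by (auto simp: fun_eq_iff algebra_simps)
    ultimately show ?thesis by simp
  qed
  have "\<bar>integral\<^sup>L lborel (\<lambda>s.
      (indicator {0..t+h} s * (t + h - s) + indicator {0..t-h} s * (t - h - s) - 2 * (indicator {0..t} s * (t - s))) * a s)\<bar>
      \<le> integral\<^sup>L lborel (\<lambda>s. \<bar>(indicator {0..t+h} s * (t + h - s) + indicator {0..t-h} s * (t - h - s) - 2 * (indicator {0..t} s * (t - s))) * a s\<bar>)"
    using integral_abs_bound by blast
  also have "\<dots> \<le> integral\<^sup>L lborel (\<lambda>s. h * (indicator {t-h..t+h} s * \<bar>a s\<bar>))"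
  proof (rule integral_mono)
    show "integrable lborel (\<lambda>s. \<bar>(indicator {0..t+h} s * (t + h - s) + indicator {0..t-h} s * (t - h - s) - 2 * (indicator {0..t} s * (t - s))) * a s\<bar>)"
      using iw by (rule integrable_abs)
    show "integrable lborel (\<lambda>s. h * (indicator {t-h..t+h} s * \<bar>a s\<bar>))" using ib by simp
    fix s :: real
    have "\<bar>(indicator {0..t+h} s * (t + h - s) + indicator {0..t-h} s * (t - h - s) - 2 * (indicator {0..t} s * (t - s))) * a s\<bar>
        = \<bar>indicator {0..t+h} s * (t + h - s) + indicator {0..t-h} s * (t - h - s) - 2 * (indicator {0..t} s * (t - s))\<bar> * \<bar>a s\<bar>"
      by (simp add: abs_mult)
    also have "\<dots> \<le> (h * indicator {t-h..t+h} s) * \<bar>a s\<bar>"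
      by (rule mult_right_mono[OF hat_bound[OF h(1,2)]]) simp
    finally show "\<bar>(indicator {0..t+h} s * (t + h - s) + indicator {0..t-h} s * (t - h - s) - 2 * (indicator {0..t} s * (t - s))) * a s\<bar>
        \<le> h * (indicator {t-h..t+h} s * \<bar>a s\<bar>)" by simp
  qed
  also have "\<dots> = h * (LBINT s:{t-h..t+h}. \<bar>a s\<bar>)"
    unfolding set_lebesgue_integral_def by simp
  finally show ?thesis unfolding eq .
qed


lemma shrink:
  fixes a :: "real \<Rightarrow> real"
  assumes int: "set_integrable lborel {0..1} a" and h0: "0 < h0" "0 \<le> t - h0" "t + h0 \<le> 1" and e: "0 < e"
  shows "\<exists>h. 0 < h \<and> h \<le> h0 \<and> (LBINT s:{t-h..t+h}. \<bar>a s\<bar>) < e"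
proof -
  have ia: "integrable lborel (\<lambda>s. indicator {0..1} s * a s)"
    using int by (simp add: set_integrable_def)
  have am[measurable]: "(\<lambda>s. indicator {0..1} s * a s) \<in> borel_measurable lborel"
    using ia by (rule borel_measurable_integrable)
  define hs where "hs n = h0 * inverse (real (Suc n))" for n
  have hs_pos: "0 < hs n" for n using h0 by (simp add: hs_def)
  have hs_le: "hs n \<le> h0" for n using h0 by (simp add: hs_def field_simps)
  have hs_lim: "hs \<longlonglongrightarrow> 0"
    unfolding hs_def using tendsto_mult[OF tendsto_const LIMSEQ_inverse_real_of_nat, of h0] by simp
  define f where "f n s = indicator {t - hs n..t + hs n} s * \<bar>indicator {0..1} s * a s\<bar>" for n s
  have m1: "(\<lambda>s. 0::real) \<in> borel_measurable lborel" by simp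
  have m2: "\<And>n. f n \<in> borel_measurable lborel" unfolding f_def by measurable
  have iw: "integrable lborel (\<lambda>s. \<bar>indicator {0..1} s * a s\<bar>)" using ia by (rule integrable_abs)
  have bd: "\<And>n. AE s in lborel. norm (f n s) \<le> \<bar>indicator {0..1} s * a s\<bar>"
    by (intro AE_I2) (auto simp: f_def indicator_def)
  have pl: "AE s in lborel. (\<lambda>n. f n s) \<longlonglongrightarrow> 0"
    using AE_lborel_singleton[of t]
  proof eventually_elim
    case (elim s)
    then have "0 < \<bar>s - t\<bar>" by simp
    then have "eventually (\<lambda>n. hs n < \<bar>s - t\<bar>) sequentially"
      using order_tendstoD(2)[OF hs_lim] by blast
    then have "eventually (\<lambda>n. f n s = 0) sequentially"
      by eventually_elim (auto simp: f_def indicator_def)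
    then show ?case by (rule tendsto_eventually)
  qed
  have lim: "(\<lambda>n. integral\<^sup>L lborel (f n)) \<longlonglongrightarrow> integral\<^sup>L lborel (\<lambda>s. 0::real)"
    using Bochner_Integration.integral_dominated_convergence[OF m1 m2 iw pl bd] by simp
  then have "eventually (\<lambda>n. integral\<^sup>L lborel (f n) < e) sequentially"
    using order_tendstoD(2) e by simp
  then obtain n where n: "integral\<^sup>L lborel (f n) < e"
    by (auto dest: eventually_happens)
  have "(LBINT s:{t - hs n..t + hs n}. \<bar>a s\<bar>) = integral\<^sup>L lborel (f n)"
  proof -
    have "(\<lambda>s. indicator {t - hs n..t + hs n} s *\<^sub>R \<bar>a s\<bar>) = f n"
      using hs_le[of n] h0 by (auto simp: fun_eq_iff f_def indicator_def)
    then show ?thesis unfolding set_lebesgue_integral_def by simp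
  qed
  then show ?thesis using n hs_pos[of n] hs_le[of n] by auto
qed

lemma gauss_meas_borel:
  "f \<in> borel_measurable (gaussian s) \<Longrightarrow> f \<in> borel_measurable borel"
  by (simp add: measurable_def)

lemma mid_scale: "mid w (d * w) (d * w) w t = w * mid 1 d d 1 t"
  unfolding mid_def by (simp add: algebra_simps)

lemma mid_formula: "mid 1 d d 1 t = (6 - d)/5 - 27/5 * (1 - d) * t * (1 - t)"
  unfolding mid_def by (simp add: power2_eq_square power3_eq_cube field_simps)

theorem proposition11:
  "\<exists>\<delta>0>0. \<forall>\<delta>::real. 0 < \<delta> \<and> \<delta> < \<delta>0 \<longrightarrow>
     (\<forall>\<mu>. is_transport_spline (\<lambda>i. real i / 3) 3
              (\<lambda>i. if i = 1 \<or> i = 2 then gaussian \<delta> else gaussian 1) \<mu>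
           \<longrightarrow> \<not> is_E_spline (\<lambda>i. real i / 3) 3
              (\<lambda>i. if i = 1 \<or> i = 2 then gaussian \<delta> else gaussian 1) \<mu>)"
proof (intro exI[of _ "1/10"] conjI allI impI notI)
  show "(0::real) < 1/10" by simp
  fix \<delta> :: real and \<mu> :: "real \<Rightarrow> real measure"
  assume \<delta>: "0 < \<delta> \<and> \<delta> < 1/10"
  then have d0: "0 < \<delta>" and d1: "\<delta> < 1/10" by auto
  define D where "D = (\<lambda>i::nat. if i = 1 \<or> i = 2 then gaussian \<delta> else gaussian 1)"
  assume TS0: "is_transport_spline (\<lambda>i. real i / 3) 3
              (\<lambda>i. if i = 1 \<or> i = 2 then gaussian \<delta> else gaussian 1) \<mu>"
  assume ES0: "is_E_spline (\<lambda>i. real i / 3) 3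
              (\<lambda>i. if i = 1 \<or> i = 2 then gaussian \<delta> else gaussian 1) \<mu>"
  have TS: "is_transport_spline (\<lambda>i. real i / 3) 3 D \<mu>" using TS0 unfolding D_def .
  have ES: "is_E_spline (\<lambda>i. real i / 3) 3 D \<mu>" using ES0 unfolding D_def .

  (* Part A: finite energy competitor *)
  define \<nu> where "\<nu> t = gaussian (sig \<delta> t)" for t
  have sigpos: "0 < sig \<delta> t" for t using sig_pos[of \<delta> t] d0 d1 by simp
  have adm: "(\<forall>t\<in>{0..1}. P2 (\<nu> t)) \<and> (\<forall>i\<le>3. \<nu> (real i / 3) = D i)"
  proof (intro conjI ballI allI impI)
    fix t show "P2 (\<nu> t)" unfolding \<nu>_def using P2_gauss[OF sigpos] .
  next
    fix i :: nat assume "i \<le> 3"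
    then have "i = 0 \<or> i = 1 \<or> i = 2 \<or> i = 3" by auto
    then show "\<nu> (real i / 3) = D i"
      by (elim disjE) (simp_all add: \<nu>_def D_def sig_knots)
  qed
  have le_nu: "spline_energy \<mu> \<le> spline_energy \<nu>"
    using ES adm unfolding is_E_spline_def by blast
  define A\<nu> where "A\<nu> s u = sig2 \<delta> s * qq u" for s u
  have Anu_mem: "(\<integral>\<^sup>+ p. indicator ({0..1} \<times> {0<..<1}) p * ennreal ((A\<nu> (fst p) (snd p))\<^sup>2) \<partial>lborel)
    \<in> {(\<integral>\<^sup>+ p. indicator ({0..1} \<times> {0<..<1}) p * ennreal ((A (fst p) (snd p))\<^sup>2) \<partial>lborel)
      | A :: real \<Rightarrow> real \<Rightarrow> real.
        (\<lambda>p. A (fst p) (snd p)) \<in> borel_measurable lborel \<and>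
        (\<exists>V :: real \<Rightarrow> real. AE u in lborel. u \<in> {0<..<1} \<longrightarrow>
            set_integrable lborel {0..1} (\<lambda>s. A s u) \<and>
            (\<forall>t\<in>{0..1}. quantile (\<nu> t) u
               = quantile (\<nu> 0) u + t * V u + (LBINT s:{0..t}. (t - s) * A s u)))}"
  proof (intro CollectI exI conjI)
    show "(\<integral>\<^sup>+ p. indicator ({0..1} \<times> {0<..<1}) p * ennreal ((A\<nu> (fst p) (snd p))\<^sup>2) \<partial>lborel)
      = (\<integral>\<^sup>+ p. indicator ({0..1} \<times> {0<..<1}) p * ennreal ((A\<nu> (fst p) (snd p))\<^sup>2) \<partial>lborel)" ..
    have m: "(\<lambda>p. A\<nu> (fst p) (snd p)) \<in> borel_measurable ((lborel::real measure) \<Otimes>\<^sub>M (lborel::real measure))"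
      unfolding A\<nu>_def sig2_def by measurable
    then show "(\<lambda>p. A\<nu> (fst p) (snd p)) \<in> borel_measurable lborel"
      by (simp only: lborel_prod)
    show "AE u in lborel. u \<in> {0<..<1} \<longrightarrow>
            set_integrable lborel {0..1} (\<lambda>s. A\<nu> s u) \<and>
            (\<forall>t\<in>{0..1}. quantile (\<nu> t) u
               = quantile (\<nu> 0) u + t * (-9 * (1 - \<delta>) * qq u) + (LBINT s:{0..t}. (t - s) * A\<nu> s u))"
    proof (intro AE_I2 impI conjI ballI)
      fix u :: real assume u: "u \<in> {0<..<1}"
      show "set_integrable lborel {0..1} (\<lambda>s. A\<nu> s u)"
        unfolding A\<nu>_def sig2_def by (intro borel_integrable_atLeastAtMost' continuous_intros)
      fix t :: real assume t: "t \<in> {0..1}"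
      have "quantile (\<nu> t) u = sig \<delta> t * q u"
        unfolding \<nu>_def using quantile_gauss[OF sigpos] u by simp
      moreover have "quantile (\<nu> 0) u = q u"
        unfolding \<nu>_def using quantile_gauss[of 1 u] u by (simp add: sig_knots)
      moreover have "(LBINT s:{0..t}. (t - s) * A\<nu> s u) = q u * (sig \<delta> t - 1 + 9 * (1 - \<delta>) * t)"
        unfolding A\<nu>_def using taylor_sig[of t \<delta> "qq u"] t u by (simp add: qq_def)
      ultimately show "quantile (\<nu> t) u
               = quantile (\<nu> 0) u + t * (-9 * (1 - \<delta>) * qq u) + (LBINT s:{0..t}. (t - s) * A\<nu> s u)"
        using u by (simp add: qq_def algebra_simps)
    qed
  qed
  have "spline_energy \<nu> \<le> (\<integral>\<^sup>+ p. indicator ({0..1} \<times> {0<..<1}) p * ennreal ((A\<nu> (fst p) (snd p))\<^sup>2) \<partial>lborel)"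
    unfolding spline_energy_def by (rule Inf_lower[OF Anu_mem])
  also have "\<dots> < \<top>" unfolding A\<nu>_def using energy_fin[of \<delta>] d0 d1 by simp
  finally have fin: "spline_energy \<mu> < \<top>" using le_nu by simp
  then obtain A :: "real \<Rightarrow> real \<Rightarrow> real" and V :: "real \<Rightarrow> real" where
    AE_A: "AE u in lborel. u \<in> {0<..<1} \<longrightarrow>
            set_integrable lborel {0..1} (\<lambda>s. A s u) \<and>
            (\<forall>t\<in>{0..1}. quantile (\<mu> t) u
               = quantile (\<mu> 0) u + t * V u + (LBINT s:{0..t}. (t - s) * A s u))"
  proof -
    assume r: "\<And>A V. AE u in lborel. u \<in> {0<..<1} \<longrightarrow>
            set_integrable lborel {0..1} (\<lambda>s. A s u) \<and>
            (\<forall>t\<in>{0..1}. quantile (\<mu> t) u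
               = quantile (\<mu> 0) u + t * V u + (LBINT s:{0..t}. (t - s) * A s u)) \<Longrightarrow> thesis"
    show thesis
    proof (rule ccontr)
      assume "\<not> thesis"
      then have "spline_energy \<mu> = Inf {}"
        unfolding spline_energy_def using r by (intro arg_cong[where f=Inf]) blast
      then show False using fin by simp
    qed
  qed

  obtain T Y where
    monge: "\<forall>i\<in>{1..3}. monge_map (D (i - 1)) (D i) (T i)" and
    spl: "\<forall>\<omega>. nat_cubic_spline (\<lambda>i. real i / 3) 3 (\<lambda>i. iter_maps T i \<omega>) (\<lambda>t. Y t \<omega>)" and
    law: "\<forall>t\<in>{0..1}. \<mu> t = distr (D 0) borel (Y t)"
    using TS unfolding is_transport_spline_def by blast
  have m1: "monge_map (gaussian 1) (gaussian \<delta>) (T 1)"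
    using monge[rule_format, of 1] by (simp add: D_def)
  have m2: "monge_map (gaussian \<delta>) (gaussian \<delta>) (T 2)"
    using monge[rule_format, of 2] by (simp add: D_def)
  have m3: "monge_map (gaussian \<delta>) (gaussian 1) (T 3)"
    using monge[rule_format, of 3] by (simp add: D_def)
  have T1m[measurable]: "T 1 \<in> borel_measurable borel"
    using m1 unfolding monge_map_def by (auto intro: gauss_meas_borel)
  have T2m[measurable]: "T 2 \<in> borel_measurable borel"
    using m2 unfolding monge_map_def by (auto intro: gauss_meas_borel)
  have T3m[measurable]: "T 3 \<in> borel_measurable borel"
    using m3 unfolding monge_map_def by (auto intro: gauss_meas_borel)
  have T1g: "T 1 \<in> borel_measurable (gaussian 1)"
    using m1 unfolding monge_map_def by auto
  have dist1: "distr (gaussian 1) borel (T 1) = gaussian \<delta>"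
    using m1 unfolding monge_map_def by auto
  have ae1: "AE \<omega> in gaussian 1. T 1 \<omega> = \<delta> * \<omega>"
    using monge_gauss[OF _ d0 m1] by simp
  have ae2: "AE y in gaussian \<delta>. T 2 y = y"
    using monge_gauss[OF d0 d0 m2] d0 by simp
  have ae3: "AE y in gaussian \<delta>. T 3 y = (1/\<delta>) * y"
    using monge_gauss[OF d0 _ m3] by simp
  have ae2': "AE \<omega> in gaussian 1. T 2 (T 1 \<omega>) = T 1 \<omega>"
  proof -
    have "AE y in distr (gaussian 1) borel (T 1). T 2 y = y" unfolding dist1 by (rule ae2)
    then show ?thesis by (subst (asm) AE_distr_iff[OF T1g]) auto
  qed
  have ae3': "AE \<omega> in gaussian 1. T 3 (T 1 \<omega>) = (1/\<delta>) * T 1 \<omega>"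
  proof -
    have "AE y in distr (gaussian 1) borel (T 1). T 3 y = (1/\<delta>) * y" unfolding dist1 by (rule ae3)
    then show ?thesis by (subst (asm) AE_distr_iff[OF T1g]) auto
  qed
  define S where "S t = mid 1 \<delta> \<delta> 1 t" for t
  have muS: "\<mu> t = distr (gaussian 1) borel (\<lambda>\<omega>. S t * \<omega>)" if t: "t \<in> {1/3..2/3}" for t
  proof -
    have "\<mu> t = distr (gaussian 1) borel (Y t)" using law t by (simp add: D_def)
    also have "Y t = (\<lambda>\<omega>. mid \<omega> (T 1 \<omega>) (T 2 (T 1 \<omega>)) (T 3 (T 2 (T 1 \<omega>))) t)"
    proof
      fix \<omega>
      show "Y t \<omega> = mid \<omega> (T 1 \<omega>) (T 2 (T 1 \<omega>)) (T 3 (T 2 (T 1 \<omega>))) t"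
        using spline_mid[OF spl[rule_format, of \<omega>] t] by (simp add: numeral_eq_Suc)
    qed
    also have "distr (gaussian 1) borel (\<lambda>\<omega>. mid \<omega> (T 1 \<omega>) (T 2 (T 1 \<omega>)) (T 3 (T 2 (T 1 \<omega>))) t)
        = distr (gaussian 1) borel (\<lambda>\<omega>. S t * \<omega>)"
    proof (rule distr_cong_AE)
      show "AE \<omega> in gaussian 1. mid \<omega> (T 1 \<omega>) (T 2 (T 1 \<omega>)) (T 3 (T 2 (T 1 \<omega>))) t = S t * \<omega>"
        using ae1 ae2' ae3'
      proof eventually_elim
        case (elim \<omega>)
        then have "T 3 (T 2 (T 1 \<omega>)) = \<omega>" using d0 by simp
        then show ?case using elim mid_scale[of \<omega> \<delta> t] by (simp add: S_def mult.commute)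
      qed
      show "(\<lambda>\<omega>. mid \<omega> (T 1 \<omega>) (T 2 (T 1 \<omega>)) (T 3 (T 2 (T 1 \<omega>))) t) \<in> borel_measurable (gaussian 1)"
        unfolding mid_def by measurable
      show "(\<lambda>\<omega>. S t * \<omega>) \<in> borel_measurable (gaussian 1)" by measurable
    qed auto
    finally show ?thesis .
  qed
  have Sform: "S t = (6 - \<delta>)/5 - 27/5 * (1 - \<delta>) * t * (1 - t)" for t
    unfolding S_def by (rule mid_formula)
  have Qmu: "quantile (\<mu> t) u = \<bar>S t\<bar> * q u" if "t \<in> {1/3..2/3}" "u \<in> {0<..<1}" for t u
    using muS[OF that(1)] quantile_lin[of u "S t"] that(2) by simp

  (* Part C: the kink *)
  have "\<exists>ts. 1/3 \<le> ts \<and> ts \<le> 1/2 \<and> S ts = 0"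
  proof (rule IVT2')
    show "S (1/2) \<le> 0" using d1 unfolding Sform by simp
    show "0 \<le> S (1/3)" using d0 unfolding Sform by simp
    show "continuous_on {1/3..1/2} S" unfolding Sform[abs_def] by (intro continuous_intros)
  qed simp
  then obtain ts where ts: "1/3 \<le> ts" "ts \<le> 1/2" "S ts = 0" by blast
  have ts1: "ts \<noteq> 1/3"
  proof
    assume "ts = 1/3"
    with ts(3) have "S (1/3) = 0" by simp
    then show False using d0 unfolding Sform by simp
  qed
  have ts2: "ts \<noteq> 1/2"
  proof
    assume "ts = 1/2"
    with ts(3) have "S (1/2) = 0" by simp
    then show False using d1 unfolding Sform by simp
  qed
  define \<kappa> where "\<kappa> = 54/5 * (1 - \<delta>) * (1 - 2 * ts)"
  have \<kappa>: "0 < \<kappa>" using ts ts2 d1 unfolding \<kappa>_def by (intro mult_pos_pos) auto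
  have Sdiff: "S (ts + h) - S (ts - h) = - \<kappa> * h" for h
    unfolding Sform \<kappa>_def by (simp add: field_simps)
  define z where "z = cdf (gaussian 1) 0"
  have "\<exists>u. u \<in> {0<..<1} \<and> u \<noteq> z \<and> set_integrable lborel {0..1} (\<lambda>s. A s u) \<and>
            (\<forall>t\<in>{0..1}. quantile (\<mu> t) u
               = quantile (\<mu> 0) u + t * V u + (LBINT s:{0..t}. (t - s) * A s u))"
  proof (rule ccontr)
    assume nex: "\<not> ?thesis"
    have "AE u in lborel. u \<notin> {0<..<1::real}"
      using eventually_conj[OF AE_A AE_lborel_singleton[of z]]
      by eventually_elim (insert nex, blast)
    then have "{0<..<1::real} \<in> null_sets lborel"
      by (subst AE_iff_null_sets) auto
    then show False by (simp add: null_sets_def)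
  qed
  then obtain u where u: "u \<in> {0<..<1}" "u \<noteq> z" and int: "set_integrable lborel {0..1} (\<lambda>s. A s u)"
    and rep: "\<forall>t\<in>{0..1}. quantile (\<mu> t) u
               = quantile (\<mu> 0) u + t * V u + (LBINT s:{0..t}. (t - s) * A s u)"
    by blast
  have c: "q u \<noteq> 0" using q_zero[of u] u unfolding z_def by auto
  define h0 where "h0 = min (ts - 1/3) (1/6)"
  have h0: "0 < h0" using ts ts1 unfolding h0_def by auto
  have e: "0 < \<bar>q u\<bar> * \<kappa>" using c \<kappa> by simp
  obtain h where h: "0 < h" "h \<le> h0" and small: "(LBINT s:{ts-h..ts+h}. \<bar>A s u\<bar>) < \<bar>q u\<bar> * \<kappa>"
    using shrink[OF int h0, of ts, OF _ _ e] ts unfolding h0_def by auto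
  have hp: "ts - h \<ge> 1/3" "ts + h \<le> 2/3" using h ts unfolding h0_def by auto
  have bound: "\<bar>(LBINT s:{0..ts+h}. (ts + h - s) * A s u) + (LBINT s:{0..ts-h}. (ts - h - s) * A s u)
          - 2 * (LBINT s:{0..ts}. (ts - s) * A s u)\<bar> \<le> h * (LBINT s:{ts-h..ts+h}. \<bar>A s u\<bar>)"
    by (rule second_diff[OF int h(1)]) (use hp in auto)
  have r1: "quantile (\<mu> (ts + h)) u = quantile (\<mu> 0) u + (ts + h) * V u + (LBINT s:{0..ts+h}. (ts + h - s) * A s u)"
    by (rule rep[rule_format]) (use hp ts h in auto)
  have r2: "quantile (\<mu> (ts - h)) u = quantile (\<mu> 0) u + (ts - h) * V u + (LBINT s:{0..ts-h}. (ts - h - s) * A s u)"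
    by (rule rep[rule_format]) (use hp ts h in auto)
  have r3: "quantile (\<mu> ts) u = quantile (\<mu> 0) u + ts * V u + (LBINT s:{0..ts}. (ts - s) * A s u)"
    by (rule rep[rule_format]) (use ts in auto)
  have q1: "quantile (\<mu> (ts + h)) u = \<bar>S (ts + h)\<bar> * q u" using Qmu hp h u by auto
  have q2: "quantile (\<mu> (ts - h)) u = \<bar>S (ts - h)\<bar> * q u" using Qmu hp h u by auto
  have q3: "quantile (\<mu> ts) u = 0" using Qmu[of ts u] ts u by auto
  have "\<bar>q u\<bar> * (\<kappa> * h) \<le> \<bar>q u\<bar> * (\<bar>S (ts + h)\<bar> + \<bar>S (ts - h)\<bar>)"
  proof (rule mult_left_mono)
    have "\<kappa> * h = \<bar>S (ts + h) - S (ts - h)\<bar>" using Sdiff[of h] \<kappa> h by simp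
    also have "\<dots> \<le> \<bar>S (ts + h)\<bar> + \<bar>S (ts - h)\<bar>" by (rule abs_triangle_ineq4)
    finally show "\<kappa> * h \<le> \<bar>S (ts + h)\<bar> + \<bar>S (ts - h)\<bar>" .
  qed simp
  also have "\<dots> = \<bar>(LBINT s:{0..ts+h}. (ts + h - s) * A s u) + (LBINT s:{0..ts-h}. (ts - h - s) * A s u)
          - 2 * (LBINT s:{0..ts}. (ts - s) * A s u)\<bar>"
  proof -
    have "(LBINT s:{0..ts+h}. (ts + h - s) * A s u) + (LBINT s:{0..ts-h}. (ts - h - s) * A s u)
          - 2 * (LBINT s:{0..ts}. (ts - s) * A s u)
        = quantile (\<mu> (ts + h)) u + quantile (\<mu> (ts - h)) u - 2 * quantile (\<mu> ts) u"
      unfolding r1 r2 r3 by (simp add: algebra_simps)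
    also have "\<dots> = (\<bar>S (ts + h)\<bar> + \<bar>S (ts - h)\<bar>) * q u" unfolding q1 q2 q3 by (simp add: algebra_simps)
    finally show ?thesis by (simp add: abs_mult)
  qed
  also have "\<dots> \<le> h * (LBINT s:{ts-h..ts+h}. \<bar>A s u\<bar>)" by (rule bound)
  also have "\<dots> < h * (\<bar>q u\<bar> * \<kappa>)" using small h by simp
  finally show False by (simp add: algebra_simps)
qed

end
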